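(* $\mathrm{Sort}(\mathrm{SC}_{1\underline{32}})$ is not a permutation class.
   Context: $\mathfrak S_n$ is the set of permutations of $\{1,\dots,n\}$. A permutation $\pi$ contains a (classical) permutation $\tau$ if some subsequence of $\pi$ has the same relative order as $\tau$. A permutation class is a set $\Pi$ of permutations such that every permutation contained in some $\pi\in\Pi$ is also in $\Pi$. A vincular pattern is a permutation with some entries underlined; a sequence contains it if it has a subsequence with the same relative order in which entries corresponding to adjacent underlined entries occupy consecutive positions. An occurrence of $1\underline{32}$ is $a_i a_j a_{j+1}$ with $i<j$ and $a_i<a_{j+1}<a_j$. For a pattern $\sigma$, the map $\mathrm{SC}_\sigma$ acts on $\tau$: read entries left to right; when the next entry $x$ is read, if pushing $x$ yields a stack whose entries read top to bottom (stack adjacency = consecutive positions) avoid $\sigma$, push $x$; otherwise pop the top stack entry to the output and repeat. At the end pop all remaining entries; the output is $\mathrm{SC}_\sigma(\tau)$. West's stack-sorting map is $s=\mathrm{SC}_{21}$. $\mathrm{Sort}_n(\mathrm{SC}_\sigma)=\{\tau\in\mathfrak S_n : s(\mathrm{SC}_\sigma(\tau))=12\cdots n\}$ and $\mathrm{Sort}(\mathrm{SC}_\sigma)=\bigcup_{n\ge1}\mathrm{Sort}_n(\mathrm{SC}_\sigma)$. *)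

theory Defs
  imports Main
begin

text \<open>A vincular pattern: a permutation (as a list) together with the set U of
 0-based positions i such that entries i and i+1 are underlined together
 (must occupy consecutive positions).\<close>
type_synonym vpattern = "nat list \<times> nat set"

definition vcontains :: "vpattern \<Rightarrow> nat list \<Rightarrow> bool" where
  "vcontains \<sigma> a \<longleftrightarrow>
     (\<exists>js. length js = length (fst \<sigma>) \<and> sorted_wrt (<) js \<and>
        (\<forall>i\<in>set js. i < length a) \<and>
        (\<forall>i<length (fst \<sigma>). \<forall>j<length (fst \<sigma>).
            (a ! (js ! i) < a ! (js ! j)) \<longleftrightarrow> (fst \<sigma> ! i < fst \<sigma> ! j)) \<and>
        (\<forall>i\<in>snd \<sigma>. Suc i < length (fst \<sigma>) \<longrightarrow> js ! Suc i = Suc (js ! i)))"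

definition pat_132u :: vpattern where "pat_132u = ([1,3,2], {1})"
definition pat_21 :: vpattern where "pat_21 = ([2,1], {})"

text \<open>Stack as a list whose head is the top; the stack read top to bottom is the list itself.
 When the stack is empty, the entry is always pushed (for patterns of length \<ge> 2 this
 agrees with the rule, since a one-entry stack avoids them).\<close>
function sc_aux :: "vpattern \<Rightarrow> nat list \<Rightarrow> nat list \<Rightarrow> nat list" where
  "sc_aux \<sigma> [] st = st"
| "sc_aux \<sigma> (x # xs) st =
     (if st = [] \<or> \<not> vcontains \<sigma> (x # st) then sc_aux \<sigma> xs (x # st)
      else hd st # sc_aux \<sigma> (x # xs) (tl st))"
  by pat_completeness auto
termination
  by (relation "measure (\<lambda>(_, xs, st). 2 * length xs + length st)") (auto simp: length_tl)

definition SC :: "vpattern \<Rightarrow> nat list \<Rightarrow> nat list" where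
  "SC \<sigma> \<tau> = sc_aux \<sigma> \<tau> []"

definition stack_sort :: "nat list \<Rightarrow> nat list" where
  "stack_sort = SC pat_21"

definition is_perm :: "nat list \<Rightarrow> bool" where
  "is_perm xs \<longleftrightarrow> distinct xs \<and> set xs = {1..length xs}"

definition perm_contains :: "nat list \<Rightarrow> nat list \<Rightarrow> bool" where
  "perm_contains \<pi> \<tau> \<longleftrightarrow> vcontains (\<tau>, {}) \<pi>"

definition perm_class :: "nat list set \<Rightarrow> bool" where
  "perm_class \<Pi> \<longleftrightarrow> (\<forall>\<pi>\<in>\<Pi>. is_perm \<pi>) \<and>
     (\<forall>\<pi>\<in>\<Pi>. \<forall>\<tau>. is_perm \<tau> \<and> length \<tau> \<ge> 1 \<and> perm_contains \<pi> \<tau> \<longrightarrow> \<tau> \<in> \<Pi>)"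

definition Sort_SC :: "vpattern \<Rightarrow> nat list set" where
  "Sort_SC \<sigma> = {\<tau>. is_perm \<tau> \<and> length \<tau> \<ge> 1 \<and>
      stack_sort (SC \<sigma> \<tau>) = [1..<length \<tau> + 1]}"

end

theory Submission
  imports Defs
begin

lemma all3: "(\<forall>i<(3::nat). P i) \<longleftrightarrow> P 0 \<and> P 1 \<and> P 2"
  by (auto simp: numeral_3_eq_3 numeral_2_eq_2 less_Suc_eq)
lemma all2: "(\<forall>i<(2::nat). P i) \<longleftrightarrow> P 0 \<and> P 1"
  by (auto simp: numeral_2_eq_2 less_Suc_eq)

lemma len3: "length js = 3 \<Longrightarrow> \<exists>a b c. js = [a,b,c]"
  by (auto simp: length_Suc_conv numeral_3_eq_3)
lemma len2: "length js = 2 \<Longrightarrow> \<exists>a b. js = [a,b]"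
  by (auto simp: length_Suc_conv numeral_2_eq_2)

lemma v132: "vcontains pat_132u a \<longleftrightarrow>
  (\<exists>j<length a. \<exists>i<j. Suc j < length a \<and> a!i < a!Suc j \<and> a!Suc j < a!j)"
proof
  assume "vcontains pat_132u a"
  then obtain js where l0: "length js = length [1,3,2::nat]" and s: "sorted_wrt (<) js" and b: "\<forall>i\<in>set js. i < length a"
    and r: "\<forall>i<length [1,3,2::nat]. \<forall>j<length [1,3,2::nat]. (a ! (js ! i) < a ! (js ! j)) \<longleftrightarrow> ([1,3,2::nat] ! i < [1,3,2] ! j)"
    and u0: "\<forall>i\<in>{1}. Suc i < length [1,3,2::nat] \<longrightarrow> js ! Suc i = Suc (js ! i)"
    unfolding vcontains_def pat_132u_def fst_conv snd_conv by blast
  have l: "length js = 3" using l0 by simp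
  from len3[OF l] obtain x y z where js: "js = [x,y,z]" by blast
  have u: "z = Suc y" using u0 by (simp add: js)
  have r1: "a!x < a!z" using r[rule_format, of 0 2] by (simp add: js)
  have r2: "a!z < a!y" using r[rule_format, of 2 1] by (simp add: js)
  show "\<exists>j<length a. \<exists>i<j. Suc j < length a \<and> a!i < a!Suc j \<and> a!Suc j < a!j"
    using s b r1 r2 u unfolding js by (intro exI[of _ y]) auto
next
  assume "\<exists>j<length a. \<exists>i<j. Suc j < length a \<and> a!i < a!Suc j \<and> a!Suc j < a!j"
  then obtain i j where h: "j<length a" "i<j" "Suc j < length a" "a!i < a!Suc j" "a!Suc j < a!j" by blast
  show "vcontains pat_132u a"
    unfolding vcontains_def pat_132u_def
    using h by (intro exI[of _ "[i,j,Suc j]"]) (auto simp: less_Suc_eq numeral_3_eq_3)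
qed

lemma v21: "vcontains pat_21 a \<longleftrightarrow> (\<exists>j<length a. \<exists>i<j. a!j < a!i)"
proof
  assume "vcontains pat_21 a"
  then obtain js where l0: "length js = length [2,1::nat]" and s: "sorted_wrt (<) js" and b: "\<forall>i\<in>set js. i < length a"
    and r: "\<forall>i<length [2,1::nat]. \<forall>j<length [2,1::nat]. (a ! (js ! i) < a ! (js ! j)) \<longleftrightarrow> ([2,1::nat] ! i < [2,1] ! j)"
    unfolding vcontains_def pat_21_def fst_conv snd_conv by blast
  have l: "length js = 2" using l0 by simp
  from len2[OF l] obtain x y where js: "js = [x,y]" by blast
  have r1: "a!y < a!x" using r[rule_format, of 1 0] by (simp add: js)
  show "\<exists>j<length a. \<exists>i<j. a!j < a!i"
    using s b r1 unfolding js by (intro exI[of _ y]) auto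
next
  assume "\<exists>j<length a. \<exists>i<j. a!j < a!i"
  then obtain i j where h: "j<length a" "i<j" "a!j < a!i" by blast
  show "vcontains pat_21 a"
    unfolding vcontains_def pat_21_def
    using h by (intro exI[of _ "[i,j]"]) (auto simp: less_Suc_eq numeral_2_eq_2)
qed

lemma exS: "(\<exists>i<Suc n. P i) \<longleftrightarrow> P 0 \<or> (\<exists>i<n. P (Suc i))"
  by (metis less_Suc_eq_0_disj)
lemma exN: "(\<exists>i<numeral k. P i) \<longleftrightarrow> P 0 \<or> (\<exists>i<pred_numeral k. P (Suc i))"
  by (simp add: numeral_eq_Suc exS)
lemma ex0: "(\<exists>i<(0::nat). P i) \<longleftrightarrow> False" by simp

lemmas cmp = v132 v21 exS exN ex0

lemma in_sort: "[2,4,1,3] \<in> Sort_SC pat_132u"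
proof -
  have 1: "SC pat_132u [2,4,1,3] = [4,3,1,2]"
    unfolding SC_def by (simp add: cmp)
  have 2: "stack_sort [4,3,1,2] = [1,2,3,4]"
    unfolding stack_sort_def SC_def by (simp add: cmp)
  show ?thesis unfolding Sort_SC_def mem_Collect_eq is_perm_def 1 2 by (simp add: upt_rec, auto)
qed

lemma not_sort: "[1,3,2] \<notin> Sort_SC pat_132u"
proof -
  have 1: "SC pat_132u [1,3,2] = [2,3,1]"
    unfolding SC_def by (simp add: cmp)
  have 2: "stack_sort [2,3,1] = [2,1,3]"
    unfolding stack_sort_def SC_def by (simp add: cmp)
  show ?thesis unfolding Sort_SC_def mem_Collect_eq 1 2 by (simp add: upt_rec)
qed

lemma contains: "perm_contains [2,4,1,3] [1,3,2]"
  unfolding perm_contains_def vcontains_def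
  by (intro exI[of _ "[0,1,3]"]) (auto simp: less_Suc_eq numeral_3_eq_3)

theorem mainTheorem18:
  shows "\<not> perm_class (Sort_SC pat_132u)"
proof
  assume "perm_class (Sort_SC pat_132u)"
  then have h: "\<forall>\<pi>\<in>Sort_SC pat_132u. \<forall>\<tau>. is_perm \<tau> \<and> length \<tau> \<ge> 1 \<and> perm_contains \<pi> \<tau> \<longrightarrow> \<tau> \<in> Sort_SC pat_132u"
    unfolding perm_class_def by blast
  have p: "is_perm [1,3,2]" unfolding is_perm_def by auto
  have "[1,3,2] \<in> Sort_SC pat_132u"
    using h[rule_format, OF in_sort, of "[1,3,2]"] p contains by simp
  with not_sort show False by blast
qed

end
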